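(* Assume $\kappa\ge\|f'\|_{C[-\beta,\beta]}$ and $\|\phi^0\|_\infty\le\beta$. If $$\tau_1\le\Big(\frac{4}{11\varsigma m(\kappa+4\varepsilon^2/h^2)\Gamma(2-\alpha)}\Big)^{1/\alpha},$$ then the $L2$-$1_\sigma$ first-step iterates satisfy $\|\hat\phi^1_{(s)}\|_\infty\le\beta$ for all $s\ge1$. If moreover $$\tau_1\le\Big(\frac{4}{11\kappa(1-\varsigma)m\Gamma(2-\alpha)}\Big)^{1/\alpha},$$ then the iterates converge in $\|\cdot\|_\infty$ to a solution $\hat\phi^1$ of the $L2$-$1_\sigma$ nonlinear first-step equation with $\|\hat\phi^1\|_\infty\le\beta$, and this is its unique solution with $\|\hat\phi^1\|_\infty\le\beta$.
   Context: Setting: $\Omega=(0,L)^2$ with periodic boundary conditions; constants $m>0$, $\varepsilon>0$, $\alpha\in(0,1)$, and $\varsigma:=\alpha/2$. The nonlinearity $f=-F'$ is one of: (double-well) $F(\phi)=\frac14(1-\phi^2)^2$, $f(\phi)=\phi-\phi^3$, with $\beta=1$; or (Flory–Huggins) $F(\phi)=\frac{\theta}{2}[(1+\phi)\ln(1+\phi)+(1-\phi)\ln(1-\phi)]-\frac{\theta_c}{2}\phi^2$, $f(\phi)=\frac{\theta}{2}\ln\frac{1-\phi}{1+\phi}+\theta_c\phi$ on $(-1,1)$, with $\theta_c>\theta>0$ and $\beta\in(0,1)$ the positive root of $f$. In both cases $f(\pm\beta)=0$. Spatial discretization: $M\in\mathbb N$, $h=L/M$; $\mathbb V_h$ is the space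 of real grid functions $v=\{v_{ij}\}_{i,j\in\mathbb Z}$ that are $M$-periodic in each index; $\|v\|_\infty=\max_{1\le i,j\le M}|v_{ij}|$; $\Delta_hv_{ij}=h^{-2}(v_{i+1,j}+v_{i-1,j}+v_{i,j+1}+v_{i,j-1}-4v_{ij})$. Scalar functions act on grid functions pointwise. Time grid $0=t_0<t_1$, $\tau_1=t_1$; $\omega_\mu(t)=t^{\mu-1}/\Gamma(\mu)$. Constant $\kappa\ge0$; $\phi^0\in\mathbb V_h$. First step of the $L2$-$1_\sigma$ schemes: $B^{(1)}_0=\frac1{\tau_1}\int_{0}^{t_{1-\varsigma}}\omega_{1-\alpha}(t_{1-\varsigma}-s)\,ds=\frac{(1-\varsigma)^{1-\alpha}}{\Gamma(2-\alpha)\tau_1^\alpha}$ with $t_{1-\varsigma}=(1-\varsigma)t_1$. The nonlinear first-step equation for $\hat\phi^1\in\mathbb V_h$ is $B^{(1)}_0(\hat\phi^1-\phi^0)=m(\varepsilon^2\Delta_h\hat\phi^{1-\varsigma}+f(\hat\phi^{1-\varsigma}))$ with $\hat\phi^{1-\varsigma}=(1-\varsigma)\hat\phi^1+\varsigma\phi^0$. The first-step iteration is $\hat\phi^1_{(0)}=\phi^0$ and, for $s\ge1$, $B^{(1)}_0(\hat\phi^1_{(s)}-\phi^0)=m(\varepsilon^2\Delta_h\hat\phi^{1-\varsigma}_{(s)}+f(\hat\phi^{1-\varsigma}_{(s-1)})-\kappa(\hat\phi^{1-\varsigma}_{(s)}-\hat\phi^{1-\varsigma}_{(s-1)}))$,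 where $\hat\phi^{1-\varsigma}_{(\ell)}=(1-\varsigma)\hat\phi^1_{(\ell)}+\varsigma\phi^0$. *)

theory Defs
  imports "HOL-Analysis.Analysis"
begin

type_synonym grid = "int \<Rightarrow> int \<Rightarrow> real"

definition grid_periodic :: "nat \<Rightarrow> grid \<Rightarrow> bool" where
  "grid_periodic M v \<longleftrightarrow> (\<forall>i j. v (i + int M) j = v i j \<and> v i (j + int M) = v i j)"

definition gnorm_inf :: "nat \<Rightarrow> grid \<Rightarrow> real" where
  "gnorm_inf M v = Max ((\<lambda>(i, j). \<bar>v i j\<bar>) ` ({1..int M} \<times> {1..int M}))"

definition lap_h :: "real \<Rightarrow> grid \<Rightarrow> grid" where
  "lap_h h v = (\<lambda>i j. (v (i+1) j + v (i-1) j + v i (j+1) + v i (j-1) - 4 * v i j) / h^2)"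

text \<open>Double-well nonlinearity f = -F' with F(x) = (1-x^2)^2/4.\<close>
definition f_dw :: "real \<Rightarrow> real" where
  "f_dw x = x - x^3"

definition f_fh :: "real \<Rightarrow> real \<Rightarrow> real \<Rightarrow> real" where
  "f_fh \<theta> \<theta>c x = \<theta> / 2 * ln ((1 - x) / (1 + x)) + \<theta>c * x"

text \<open>First-step coefficient B_0^(1) of the L2-1_sigma scheme, sigma = alpha/2.\<close>
definition B0 :: "real \<Rightarrow> real \<Rightarrow> real" where
  "B0 \<alpha> \<tau>1 = (1 - \<alpha>/2) powr (1 - \<alpha>) / (Gamma (2 - \<alpha>) * \<tau>1 powr \<alpha>)"

definition shift_comb :: "real \<Rightarrow> grid \<Rightarrow> grid \<Rightarrow> grid" where
  "shift_comb \<alpha> u phi0 = (\<lambda>i j. (1 - \<alpha>/2) * u i j + (\<alpha>/2) * phi0 i j)"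

definition first_step_eq ::
  "(real \<Rightarrow> real) \<Rightarrow> real \<Rightarrow> real \<Rightarrow> real \<Rightarrow> real \<Rightarrow> real \<Rightarrow> grid \<Rightarrow> grid \<Rightarrow> bool" where
  "first_step_eq f m \<epsilon> \<alpha> h \<tau>1 phi0 u \<longleftrightarrow>
     (\<forall>i j. B0 \<alpha> \<tau>1 * (u i j - phi0 i j) =
        m * (\<epsilon>^2 * lap_h h (shift_comb \<alpha> u phi0) i j + f (shift_comb \<alpha> u phi0 i j)))"

definition first_step_iter ::
  "(real \<Rightarrow> real) \<Rightarrow> real \<Rightarrow> real \<Rightarrow> real \<Rightarrow> real \<Rightarrow> real \<Rightarrow> real \<Rightarrow> grid \<Rightarrow> grid \<Rightarrow> grid \<Rightarrow> bool" where
  "first_step_iter f m \<epsilon> \<alpha> \<kappa> h \<tau>1 phi0 u_old u_new \<longleftrightarrow>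
     (\<forall>i j. B0 \<alpha> \<tau>1 * (u_new i j - phi0 i j) =
        m * (\<epsilon>^2 * lap_h h (shift_comb \<alpha> u_new phi0) i j
             + f (shift_comb \<alpha> u_old phi0 i j)
             - \<kappa> * (shift_comb \<alpha> u_new phi0 i j - shift_comb \<alpha> u_old phi0 i j)))"

end

theory Submission
  imports Defs
begin


lemma per_i: assumes "grid_periodic M w" shows "w (i + k * int M) j = w i j"
proof (induct k rule: int_induct[where k=0])
  case base then show ?case by simp
next
  case (step1 k)
  have "w (i + (k+1) * int M) j = w ((i + k * int M) + int M) j" by (simp add: algebra_simps)
  also have "... = w (i + k * int M) j" using assms unfolding grid_periodic_def by blast
  finally show ?case using step1 by simp
next
  case (step2 k)
  have "w (i + k * int M) j = w ((i + (k-1) * int M) + int M) j" by (simp add: algebra_simps)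
  also have "... = w (i + (k-1) * int M) j" using assms unfolding grid_periodic_def by blast
  finally show ?case using step2 by simp
qed

lemma per_j: assumes "grid_periodic M w" shows "w i (j + k * int M) = w i j"
proof (induct k rule: int_induct[where k=0])
  case base then show ?case by simp
next
  case (step1 k)
  have "w i (j + (k+1) * int M) = w i ((j + k * int M) + int M)" by (simp add: algebra_simps)
  also have "... = w i (j + k * int M)" using assms unfolding grid_periodic_def by blast
  finally show ?case using step1 by simp
next
  case (step2 k)
  have "w i (j + k * int M) = w i ((j + (k-1) * int M) + int M)" by (simp add: algebra_simps)
  also have "... = w i (j + (k-1) * int M)" using assms unfolding grid_periodic_def by blast
  finally show ?case using step2 by simp
qed

lemma red_mem: assumes "M \<ge> 1" shows "(i - 1) mod int M + 1 \<in> {1..int M}"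
proof -
  have "(i-1) mod int M < int M" by (rule pos_mod_bound) (use assms in simp)
  moreover have "0 \<le> (i-1) mod int M" by (rule pos_mod_sign) (use assms in simp)
  ultimately show ?thesis by simp
qed

lemma red_eq: assumes "grid_periodic M w" "M \<ge> 1"
  shows "w i j = w ((i - 1) mod int M + 1) ((j - 1) mod int M + 1)"
proof -
  have i: "i = ((i - 1) mod int M + 1) + ((i - 1) div int M) * int M"
    by (metis add.commute diff_add_cancel div_mult_mod_eq add.assoc mult.commute)
  have j: "j = ((j - 1) mod int M + 1) + ((j - 1) div int M) * int M"
    by (metis add.commute diff_add_cancel div_mult_mod_eq add.assoc mult.commute)
  have "w i j = w ((i - 1) mod int M + 1) j"
    by (subst i) (rule per_i[OF assms(1)])
  also have "... = w ((i - 1) mod int M + 1) ((j - 1) mod int M + 1)"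
    by (subst j) (rule per_j[OF assms(1)])
  finally show ?thesis .
qed

lemma gnorm_ge: assumes "grid_periodic M w" "M \<ge> 1" shows "\<bar>w i j\<bar> \<le> gnorm_inf M w"
proof -
  let ?a = "(i - 1) mod int M + 1" and ?b = "(j - 1) mod int M + 1"
  have mem: "(?a, ?b) \<in> {1..int M} \<times> {1..int M}" using red_mem[OF assms(2)] by auto
  have "\<bar>w i j\<bar> = (\<lambda>(i, j). \<bar>w i j\<bar>) (?a, ?b)" using red_eq[OF assms] by simp
  also have "... \<le> gnorm_inf M w" unfolding gnorm_inf_def
    by (rule Max_ge) (use mem in auto)
  finally show ?thesis .
qed

lemma gnorm_le: assumes "M \<ge> 1" "\<And>i j. \<bar>w i j\<bar> \<le> b" shows "gnorm_inf M w \<le> b"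
  unfolding gnorm_inf_def using assms by (subst Max_le_iff) auto

lemma gnorm_nonneg: assumes "M \<ge> 1" shows "0 \<le> gnorm_inf M w"
proof -
  have "(1::int,1::int) \<in> {1..int M} \<times> {1..int M}" using assms by auto
  then have "\<bar>w 1 1\<bar> \<le> gnorm_inf M w" unfolding gnorm_inf_def by (intro Max_ge) (auto intro: rev_image_eqI)
  then show ?thesis by linarith
qed

lemma grid_max: assumes "grid_periodic M w" "M \<ge> 1"
  obtains a b where "\<And>i j. w i j \<le> w a b"
proof -
  let ?S = "{1..int M} \<times> {1..int M}"
  let ?g = "(\<lambda>(i,j). w i j)"
  have fin: "finite (?g ` ?S)" and ne: "?g ` ?S \<noteq> {}" using assms(2) by auto
  obtain p where p: "p \<in> ?S" "?g p = Max (?g ` ?S)" using Max_in[OF fin ne] by auto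
  have "w i j \<le> ?g p" for i j
  proof -
    let ?a = "(i - 1) mod int M + 1" and ?b = "(j - 1) mod int M + 1"
    have mem: "(?a, ?b) \<in> ?S" using red_mem[OF assms(2)] by auto
    have "w i j = ?g (?a, ?b)" using red_eq[OF assms] by simp
    also have "... \<le> Max (?g ` ?S)" by (rule Max_ge[OF fin]) (use mem in blast)
    finally show ?thesis using p by simp
  qed
  then show ?thesis using that by (cases p) auto
qed

lemma lap_max: assumes "\<And>i j. w i j \<le> w a b" shows "lap_h h w a b \<le> 0"
proof -
  have "w (a+1) b + w (a-1) b + w a (b+1) + w a (b-1) - 4 * w a b \<le> 0"
    using assms[of "a+1" b] assms[of "a-1" b] assms[of a "b+1"] assms[of a "b-1"] by linarith
  then show ?thesis unfolding lap_h_def by (simp add: divide_nonpos_nonneg)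
qed

lemma max_princ1: assumes "grid_periodic M w" "M \<ge> 1" "c > 0" "d \<ge> 0"
  "\<And>i j. c * w i j - d * lap_h h w i j \<le> R" shows "c * w i j \<le> R"
proof -
  obtain a b where ab: "\<And>i j. w i j \<le> w a b" using grid_max[OF assms(1,2)] by blast
  have "d * lap_h h w a b \<le> 0" using lap_max[of w a b h, OF ab] assms(4) by (simp add: mult_nonneg_nonpos)
  then have "c * w a b \<le> R" using assms(5)[of a b] by linarith
  moreover have "c * w i j \<le> c * w a b" using ab assms(3) by simp
  ultimately show ?thesis by linarith
qed

lemma max_princ: assumes "grid_periodic M w" "M \<ge> 1" "c > 0" "d \<ge> 0"
  "\<And>i j. \<bar>c * w i j - d * lap_h h w i j\<bar> \<le> R" shows "c * \<bar>w i j\<bar> \<le> R"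
proof -
  have "c * w i j \<le> R"
    by (rule max_princ1[OF assms(1-4)]) (use assms(5) abs_le_D1 in blast)
  moreover have "c * (- w) i j \<le> R"
  proof (rule max_princ1[OF _ assms(2-4)])
    show "grid_periodic M (- w)" using assms(1) unfolding grid_periodic_def by simp
    fix i j
    have "c * (- w) i j - d * lap_h h (- w) i j = - (c * w i j - d * lap_h h w i j)"
      unfolding lap_h_def by (simp add: algebra_simps diff_divide_distrib add_divide_distrib)
    then show "c * (- w) i j - d * lap_h h (- w) i j \<le> R" using assms(5)[of i j] by linarith
  qed
  ultimately show ?thesis by (simp add: abs_if)
qed

lemma lipsch: fixes f :: "real \<Rightarrow> real" assumes "\<forall>x\<in>{a..b}. f differentiable at x" "\<forall>x\<in>{a..b}. \<bar>deriv f x\<bar> \<le> k"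
  "x \<in> {a..b}" "y \<in> {a..b}" shows "\<bar>f x - f y\<bar> \<le> k * \<bar>x - y\<bar>"
proof -
  have gen: "\<bar>f v - f u\<bar> \<le> k * \<bar>v - u\<bar>" if "u < v" "u \<in> {a..b}" "v \<in> {a..b}" for u v
  proof -
    have "DERIV f t :> deriv f t" if "u \<le> t" "t \<le> v" for t
    proof -
      have "t \<in> {a..b}" using that \<open>u \<in> {a..b}\<close> \<open>v \<in> {a..b}\<close> by auto
      then show ?thesis using assms(1) DERIV_deriv_iff_real_differentiable by blast
    qed
    from MVT2[OF that(1) this] obtain z where z: "u < z" "z < v" "f v - f u = (v - u) * deriv f z" by blast
    have "\<bar>deriv f z\<bar> \<le> k" using assms(2) z that by auto
    then have "\<bar>v - u\<bar> * \<bar>deriv f z\<bar> \<le> \<bar>v - u\<bar> * k" by (simp add: mult_left_mono)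
    then show ?thesis using z(3) by (simp add: abs_mult mult.commute)
  qed
  show ?thesis
  proof (cases "x < y")
    case True then show ?thesis using gen[of x y] assms by (simp add: abs_minus_commute)
  next
    case False then show ?thesis using gen[of y x] assms by (cases "x = y") auto
  qed
qed

lemma fdw_diff: "f_dw differentiable at x"
proof -
  have "(f_dw has_real_derivative (1 - 3 * x^2)) (at x)"
    unfolding f_dw_def by (auto intro!: derivative_eq_intros simp: power2_eq_square)
  then show ?thesis using real_differentiable_def by blast
qed

lemma ffh_diff: assumes "-1 < x" "x < 1" shows "f_fh th thc differentiable at x"
proof -
  have "(f_fh th thc has_real_derivative (th / 2 * ((-(1+x) - (1-x)) / (1+x)^2 / ((1-x)/(1+x))) + thc)) (at x)"
    unfolding f_fh_def using assms by (auto intro!: derivative_eq_intros simp: power2_eq_square mult_ac)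
  then show ?thesis using real_differentiable_def by blast
qed

lemma lap_sc: assumes "h \<noteq> 0"
  shows "lap_h h (shift_comb \<alpha> u p) i j = (1-\<alpha>/2) * lap_h h u i j + (\<alpha>/2) * lap_h h p i j"
  unfolding lap_h_def shift_comb_def using assms by (simp add: field_simps)

lemma lap_diff: "lap_h h (\<lambda>i j. u i j - w i j) i j = lap_h h u i j - lap_h h w i j"
  unfolding lap_h_def diff_divide_distrib[symmetric] by (rule arg_cong[where f="\<lambda>x. x / _"]) (simp add: algebra_simps)

lemma iter_rw: assumes "first_step_iter f m \<epsilon> \<alpha> \<kappa> h \<tau> p v u" "h \<noteq> 0"
  shows "(B0 \<alpha> \<tau> + m*\<kappa>*(1-\<alpha>/2)) * u i j - m*\<epsilon>^2*(1-\<alpha>/2) * lap_h h u i j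
     = (B0 \<alpha> \<tau> - m*\<kappa>*(\<alpha>/2)) * p i j + m*\<epsilon>^2*(\<alpha>/2) * lap_h h p i j
       + m * (f (shift_comb \<alpha> v p i j) + \<kappa> * shift_comb \<alpha> v p i j)"
proof -
  have e: "B0 \<alpha> \<tau> * (u i j - p i j) =
        m * (\<epsilon>^2 * ((1-\<alpha>/2) * lap_h h u i j + (\<alpha>/2) * lap_h h p i j)
             + f (shift_comb \<alpha> v p i j)
             - \<kappa> * (((1 - \<alpha>/2) * u i j + (\<alpha>/2) * p i j) - shift_comb \<alpha> v p i j))"
    using assms(1) lap_sc[OF assms(2)] unfolding first_step_iter_def
    by (metis shift_comb_def)
  show ?thesis unfolding shift_comb_def using e unfolding shift_comb_def
    by (simp add: algebra_simps)
qed

lemma eq_iff_iter: "first_step_eq f m \<epsilon> \<alpha> h \<tau> p u = first_step_iter f m \<epsilon> \<alpha> \<kappa> h \<tau> p u u"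
  unfolding first_step_eq_def first_step_iter_def by simp



lemma abs_mult_le: fixes X r b :: real assumes "\<bar>X\<bar> \<le> b" "r \<ge> 0" shows "\<bar>r * X\<bar> \<le> r * b"
  using assms by (simp add: abs_mult mult_left_mono)

lemma bound_step:
  assumes it: "first_step_iter f m \<epsilon> \<alpha> \<kappa> h \<tau> p v u" and per: "grid_periodic M u" and M: "M \<ge> 1"
    and h: "h > 0" and m: "m > 0" and eps: "\<epsilon> > 0" and a: "0 < \<alpha>" "\<alpha> < 1" and k: "\<kappa> \<ge> 0"
    and B: "B0 \<alpha> \<tau> \<ge> (\<alpha>/2) * m * (\<kappa> + 4 * \<epsilon>^2 / h^2)"
    and vb: "\<And>i j. \<bar>v i j\<bar> \<le> \<beta>" and pb: "\<And>i j. \<bar>p i j\<bar> \<le> \<beta>"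
    and g: "\<And>x. x \<in> {-\<beta>..\<beta>} \<Longrightarrow> \<bar>f x + \<kappa> * x\<bar> \<le> \<kappa> * \<beta>"
  shows "\<bar>u i j\<bar> \<le> \<beta>"
proof -
  let ?B = "B0 \<alpha> \<tau>"
  let ?c = "?B + m*\<kappa>*(1-\<alpha>/2)"
  let ?s = "\<alpha>/2"
  let ?r = "m*\<epsilon>^2*?s/h^2"
  let ?q = "?B - m*\<kappa>*?s - 4 * ?r"
  have r0: "?r \<ge> 0" using m a by simp
  have q0: "?q \<ge> 0" using B by (simp add: algebra_simps)
  have Bpos: "?B > 0"
  proof -
    have "0 < ?s * m * (\<kappa> + 4 * \<epsilon>^2 / h^2)" 
      using a m k h eps by (intro mult_pos_pos) (auto intro!: add_nonneg_pos)
    then show ?thesis using B by linarith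
  qed
  have c0: "?c > 0" using Bpos m k a by (simp add: add_pos_nonneg)
  have d0: "m*\<epsilon>^2*(1-\<alpha>/2) \<ge> 0" using m a by simp
  have R: "\<bar>?c * u i j - m*\<epsilon>^2*(1-\<alpha>/2) * lap_h h u i j\<bar> \<le> ?c * \<beta>" for i j
  proof -
    let ?V = "shift_comb \<alpha> v p i j"
    have Vb: "?V \<in> {-\<beta>..\<beta>}"
    proof -
      have "\<bar>?V\<bar> \<le> \<bar>(1-?s) * v i j\<bar> + \<bar>?s * p i j\<bar>"
        unfolding shift_comb_def by (rule abs_triangle_ineq)
      also have "... = (1-?s) * \<bar>v i j\<bar> + ?s * \<bar>p i j\<bar>" using a by (simp add: abs_mult)
      finally have "\<bar>?V\<bar> \<le> (1-?s) * \<bar>v i j\<bar> + ?s * \<bar>p i j\<bar>" .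
      also have "... \<le> (1-?s) * \<beta> + ?s * \<beta>"
        using vb[of i j] pb[of i j] a by (intro add_mono mult_left_mono) auto
      finally show ?thesis by (auto simp: algebra_simps abs_le_iff)
    qed
    have split: "(?B - m*\<kappa>*?s) * p i j + m*\<epsilon>^2*?s * lap_h h p i j
       = ?q * p i j + ?r * (p (i+1) j + p (i-1) j + p i (j+1) + p i (j-1))"
      unfolding lap_h_def using h by (simp add: field_simps)
    have "\<bar>?q * p i j\<bar> \<le> ?q * \<beta>" using q0 pb[of i j] by (simp add: abs_mult mult_left_mono)
    moreover have "\<bar>?r * (p (i+1) j + p (i-1) j + p i (j+1) + p i (j-1))\<bar> \<le> ?r * (4*\<beta>)"
    proof -
      have "\<bar>p (i+1) j + p (i-1) j + p i (j+1) + p i (j-1)\<bar> \<le> 4*\<beta>"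
        using pb[of "i+1" j] pb[of "i-1" j] pb[of i "j+1"] pb[of i "j-1"] by linarith
      then show ?thesis using r0 by (rule abs_mult_le)
    qed
    moreover have "\<bar>m * (f ?V + \<kappa> * ?V)\<bar> \<le> m * (\<kappa> * \<beta>)"
      using g[OF Vb] m by (simp add: abs_mult mult_left_mono)
    ultimately have "\<bar>(?B - m*\<kappa>*?s) * p i j + m*\<epsilon>^2*?s * lap_h h p i j + m * (f ?V + \<kappa> * ?V)\<bar>
        \<le> ?q * \<beta> + ?r * (4*\<beta>) + m * (\<kappa> * \<beta>)" unfolding split by linarith
    also have "... = ?c * \<beta>" by (simp add: algebra_simps)
    finally show ?thesis using iter_rw[OF it, of i j] h by simp
  qed
  have "?c * \<bar>u i j\<bar> \<le> ?c * \<beta>" by (rule max_princ[OF per M c0 d0 R])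
  then show ?thesis using c0 by simp
qed

lemma contr_step:
  assumes it: "first_step_iter f m \<epsilon> \<alpha> \<kappa> h \<tau> p v u" and it': "first_step_iter f m \<epsilon> \<alpha> \<kappa> h \<tau> p v' u'"
    and per: "grid_periodic M u" and per': "grid_periodic M u'" and M: "M \<ge> 1"
    and h: "h > 0" and m: "m > 0" and a: "0 < \<alpha>" "\<alpha> < 1" and k: "\<kappa> \<ge> 0" and Bpos: "B0 \<alpha> \<tau> > 0"
    and vb: "\<And>i j. \<bar>v i j\<bar> \<le> \<beta>" and vb': "\<And>i j. \<bar>v' i j\<bar> \<le> \<beta>" and pb: "\<And>i j. \<bar>p i j\<bar> \<le> \<beta>"
    and lip: "\<And>x y. x \<in> {-\<beta>..\<beta>} \<Longrightarrow> y \<in> {-\<beta>..\<beta>} \<Longrightarrow> \<bar>f x - f y\<bar> \<le> \<kappa> * \<bar>x - y\<bar>"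
    and D: "\<And>i j. \<bar>v i j - v' i j\<bar> \<le> D"
  shows "(B0 \<alpha> \<tau> + m*\<kappa>*(1-\<alpha>/2)) * \<bar>u i j - u' i j\<bar> \<le> 2*m*\<kappa>*(1-\<alpha>/2) * D"
proof -
  let ?B = "B0 \<alpha> \<tau>"
  let ?c = "?B + m*\<kappa>*(1-\<alpha>/2)"
  let ?s = "\<alpha>/2"
  let ?w = "\<lambda>i j. u i j - u' i j"
  have c0: "?c > 0" using Bpos m k a by (simp add: add_pos_nonneg)
  have d0: "m*\<epsilon>^2*(1-\<alpha>/2) \<ge> 0" using m a by simp
  have hne: "h \<noteq> 0" using h by simp
  have perw: "grid_periodic M ?w" using per per' unfolding grid_periodic_def by simp
  have Vb: "shift_comb \<alpha> x p i j \<in> {-\<beta>..\<beta>}" if xb: "\<And>i j. \<bar>x i j\<bar> \<le> \<beta>" for x i j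
  proof -
    have "\<bar>shift_comb \<alpha> x p i j\<bar> \<le> \<bar>(1-?s) * x i j\<bar> + \<bar>?s * p i j\<bar>"
      unfolding shift_comb_def by (rule abs_triangle_ineq)
    also have "... = (1-?s) * \<bar>x i j\<bar> + ?s * \<bar>p i j\<bar>" using a by (simp add: abs_mult)
    finally have "\<bar>shift_comb \<alpha> x p i j\<bar> \<le> (1-?s) * \<bar>x i j\<bar> + ?s * \<bar>p i j\<bar>" .
    also have "... \<le> (1-?s) * \<beta> + ?s * \<beta>"
      using xb[of i j] pb[of i j] a by (intro add_mono mult_left_mono) auto
    finally show ?thesis by (auto simp: algebra_simps abs_le_iff)
  qed
  have R: "\<bar>?c * ?w i j - m*\<epsilon>^2*(1-\<alpha>/2) * lap_h h ?w i j\<bar> \<le> 2*m*\<kappa>*(1-\<alpha>/2) * D" for i j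
  proof -
    let ?V = "shift_comb \<alpha> v p i j" and ?V' = "shift_comb \<alpha> v' p i j"
    have "?c * ?w i j - m*\<epsilon>^2*(1-\<alpha>/2) * lap_h h ?w i j
       = (?c * u i j - m*\<epsilon>^2*(1-\<alpha>/2) * lap_h h u i j) - (?c * u' i j - m*\<epsilon>^2*(1-\<alpha>/2) * lap_h h u' i j)"
      unfolding lap_diff right_diff_distrib by linarith
    also have "... = m * (f ?V - f ?V') + m * \<kappa> * (?V - ?V')"
      unfolding iter_rw[OF it hne, of i j] iter_rw[OF it' hne, of i j] by (simp add: algebra_simps)
    finally have eq: "?c * ?w i j - m*\<epsilon>^2*(1-\<alpha>/2) * lap_h h ?w i j = m * (f ?V - f ?V') + m * \<kappa> * (?V - ?V')" .
    have dV: "?V - ?V' = (1-?s) * (v i j - v' i j)" unfolding shift_comb_def by (simp add: algebra_simps)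
    have "\<bar>f ?V - f ?V'\<bar> \<le> \<kappa> * \<bar>?V - ?V'\<bar>" by (rule lip[OF Vb[OF vb] Vb[OF vb']])
    then have "\<bar>m * (f ?V - f ?V') + m * \<kappa> * (?V - ?V')\<bar> \<le> m * (\<kappa> * \<bar>?V - ?V'\<bar>) + m * \<kappa> * \<bar>?V - ?V'\<bar>"
    proof -
      have "\<bar>m * (f ?V - f ?V') + m * \<kappa> * (?V - ?V')\<bar> \<le> \<bar>m * (f ?V - f ?V')\<bar> + \<bar>m * \<kappa> * (?V - ?V')\<bar>"
        by (rule abs_triangle_ineq)
      also have "... = m * \<bar>f ?V - f ?V'\<bar> + m * \<kappa> * \<bar>?V - ?V'\<bar>" using m k by (simp add: abs_mult)
      also have "... \<le> m * (\<kappa> * \<bar>?V - ?V'\<bar>) + m * \<kappa> * \<bar>?V - ?V'\<bar>"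
        using \<open>\<bar>f ?V - f ?V'\<bar> \<le> \<kappa> * \<bar>?V - ?V'\<bar>\<close> m by (intro add_right_mono mult_left_mono) auto
      finally show ?thesis .
    qed
    also have "... = 2*m*\<kappa>*(1-?s) * \<bar>v i j - v' i j\<bar>" 
    proof -
      have "\<bar>1 - ?s\<bar> = 1 - ?s" using a by simp
      then show ?thesis unfolding dV abs_mult by (simp add: algebra_simps)
    qed
    also have "... \<le> 2*m*\<kappa>*(1-?s) * D" using D[of i j] m k a by (intro mult_left_mono) auto
    finally show ?thesis unfolding eq .
  qed
  show ?thesis by (rule max_princ[OF perw M c0 d0 R])
qed



lemma f_props:
  assumes nonlin: "(f = f_dw \<and> \<beta> = 1) \<or>
       (\<exists>\<theta> \<theta>c. 0 < \<theta> \<and> \<theta> < \<theta>c \<and> f = f_fh \<theta> \<theta>c \<and> 0 < \<beta> \<and> \<beta> < 1 \<and> f \<beta> = 0)"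
  shows "\<beta> > 0 \<and> f \<beta> = 0 \<and> f (-\<beta>) = 0 \<and> (\<forall>x\<in>{-\<beta>..\<beta>}. f differentiable at x)"
  using nonlin
proof
  assume "f = f_dw \<and> \<beta> = 1"
  then show ?thesis by (auto simp: f_dw_def fdw_diff)
next
  assume "\<exists>\<theta> \<theta>c. 0 < \<theta> \<and> \<theta> < \<theta>c \<and> f = f_fh \<theta> \<theta>c \<and> 0 < \<beta> \<and> \<beta> < 1 \<and> f \<beta> = 0"
  then obtain th thc where t: "0 < th" "f = f_fh th thc" "0 < \<beta>" "\<beta> < 1" "f \<beta> = 0" by blast
  have "ln ((1 - - \<beta>) / (1 + - \<beta>)) = - ln ((1 - \<beta>) / (1 + \<beta>))"
    using t by (simp add: ln_div)
  then have "f (-\<beta>) = - f \<beta>" unfolding t(2) f_fh_def by simp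
  then have "f (-\<beta>) = 0" using t by simp
  moreover have "\<forall>x\<in>{-\<beta>..\<beta>}. f differentiable at x"
    using t ffh_diff by auto
  ultimately show ?thesis using t by simp
qed

lemma B_bound:
  assumes a: "0 < \<alpha>" "\<alpha> < 1" and tau: "\<tau> > 0" and K: "K > 0"
    and T: "\<tau> \<le> (4 / (11 * K * Gamma (2 - \<alpha>))) powr (1 / \<alpha>)"
  shows "B0 \<alpha> \<tau> \<ge> 11/8 * K"
proof -
  let ?G = "Gamma (2 - \<alpha>)"
  let ?X = "4 / (11 * K * ?G)"
  have G: "?G > 0" using a by simp
  have X: "?X > 0" using G K by simp
  have "\<tau> powr \<alpha> \<le> (?X powr (1/\<alpha>)) powr \<alpha>"
    using T tau a by (intro powr_mono2) auto
  also have "... = ?X" using a X by (simp add: powr_powr)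
  finally have ta: "\<tau> powr \<alpha> \<le> ?X" .
  have tp: "\<tau> powr \<alpha> > 0" using tau by simp
  have "(1 - \<alpha>/2) powr 1 \<le> (1 - \<alpha>/2) powr (1 - \<alpha>)"
    using a by (intro powr_mono') auto
  then have num: "(1 - \<alpha>/2) powr (1 - \<alpha>) \<ge> 1/2" using a by simp
  have "11/8 * K = (1/2) / (?G * ?X)" using G K by (simp add: field_simps)
  also have "... \<le> (1/2) / (?G * \<tau> powr \<alpha>)"
    using G tp ta K by (intro divide_left_mono mult_left_mono mult_pos_pos) auto
  also have "... \<le> (1 - \<alpha>/2) powr (1 - \<alpha>) / (?G * \<tau> powr \<alpha>)"
    using num G tp by (intro divide_right_mono) auto
  finally show ?thesis unfolding B0_def .
qed



theorem mainTheorem8: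
  fixes L m \<epsilon> \<alpha> \<kappa> \<beta> \<tau>1 :: real and M :: nat
    and f :: "real \<Rightarrow> real" and phi0 :: grid and phi :: "nat \<Rightarrow> grid"
  assumes L: "L > 0" and M: "M \<ge> 1" and m: "m > 0" and eps: "\<epsilon> > 0"
    and alpha: "0 < \<alpha>" "\<alpha> < 1" and tau: "\<tau>1 > 0" and kap0: "\<kappa> \<ge> 0"
    and nonlin: "(f = f_dw \<and> \<beta> = 1) \<or>
       (\<exists>\<theta> \<theta>c. 0 < \<theta> \<and> \<theta> < \<theta>c \<and> f = f_fh \<theta> \<theta>c \<and> 0 < \<beta> \<and> \<beta> < 1 \<and> f \<beta> = 0)"
    and kap: "\<forall>x\<in>{-\<beta>..\<beta>}. \<bar>deriv f x\<bar> \<le> \<kappa>"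
    and phi0_per: "grid_periodic M phi0"
    and phi0_bd: "gnorm_inf M phi0 \<le> \<beta>"
    and iter0: "phi 0 = phi0"
    and iter_per: "\<forall>s. grid_periodic M (phi s)"
    and iter: "\<forall>s\<ge>1. first_step_iter f m \<epsilon> \<alpha> \<kappa> (L / real M) \<tau>1 phi0 (phi (s - 1)) (phi s)"
  shows
    "(\<tau>1 \<le> (4 / (11 * (\<alpha>/2) * m * (\<kappa> + 4 * \<epsilon>^2 / (L / real M)^2) * Gamma (2 - \<alpha>))) powr (1 / \<alpha>)
       \<longrightarrow> (\<forall>s\<ge>1. gnorm_inf M (phi s) \<le> \<beta>))
     \<and> ((\<tau>1 \<le> (4 / (11 * (\<alpha>/2) * m * (\<kappa> + 4 * \<epsilon>^2 / (L / real M)^2) * Gamma (2 - \<alpha>))) powr (1 / \<alpha>)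
        \<and> \<tau>1 \<le> (4 / (11 * \<kappa> * (1 - \<alpha>/2) * m * Gamma (2 - \<alpha>))) powr (1 / \<alpha>))
       \<longrightarrow> (\<exists>phi1. grid_periodic M phi1
              \<and> first_step_eq f m \<epsilon> \<alpha> (L / real M) \<tau>1 phi0 phi1
              \<and> gnorm_inf M phi1 \<le> \<beta>
              \<and> ((\<lambda>s. gnorm_inf M (\<lambda>i j. phi s i j - phi1 i j)) \<longlonglongrightarrow> 0)
              \<and> (\<forall>psi. grid_periodic M psi \<and> first_step_eq f m \<epsilon> \<alpha> (L / real M) \<tau>1 phi0 psi
                       \<and> gnorm_inf M psi \<le> \<beta> \<longrightarrow> psi = phi1)))"
proof -
  define h where "h = L / real M"
  have M1: "M \<ge> 1" using M .
  have h: "h > 0" using L M unfolding h_def by simp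
  have hne: "h \<noteq> 0" using h by simp
  have it: "\<And>s. s \<ge> 1 \<Longrightarrow> first_step_iter f m \<epsilon> \<alpha> \<kappa> h \<tau>1 phi0 (phi (s - 1)) (phi s)"
    using iter unfolding h_def by blast
  have itS: "\<And>n. first_step_iter f m \<epsilon> \<alpha> \<kappa> h \<tau>1 phi0 (phi n) (phi (Suc n))"
    using it[of "Suc _"] by simp
  have fp: "\<beta> > 0 \<and> f \<beta> = 0 \<and> f (-\<beta>) = 0 \<and> (\<forall>x\<in>{-\<beta>..\<beta>}. f differentiable at x)"
    by (rule f_props[OF nonlin])
  have lip: "\<And>x y. x \<in> {-\<beta>..\<beta>} \<Longrightarrow> y \<in> {-\<beta>..\<beta>} \<Longrightarrow> \<bar>f x - f y\<bar> \<le> \<kappa> * \<bar>x - y\<bar>"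
    using lipsch[of "-\<beta>" \<beta> f \<kappa>] fp kap by blast
  have g: "\<bar>f x + \<kappa> * x\<bar> \<le> \<kappa> * \<beta>" if x: "x \<in> {-\<beta>..\<beta>}" for x
  proof -
    have b: "\<beta> \<in> {-\<beta>..\<beta>}" "-\<beta> \<in> {-\<beta>..\<beta>}" using fp by auto
    have "\<bar>f x - f \<beta>\<bar> \<le> \<kappa> * \<bar>x - \<beta>\<bar>" by (rule lip[OF x b(1)])
    moreover have "\<bar>f x - f (-\<beta>)\<bar> \<le> \<kappa> * \<bar>x - -\<beta>\<bar>" by (rule lip[OF x b(2)])
    ultimately have "f x \<le> \<kappa> * (\<beta> - x)" "f x \<ge> - (\<kappa> * (x + \<beta>))" using fp x by (auto simp: abs_le_iff)
    then show ?thesis by (auto simp: abs_le_iff algebra_simps)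
  qed
  have cont: "isCont f x" if "x \<in> {-\<beta>..\<beta>}" for x
    using fp that differentiable_imp_continuous_within[where s=UNIV] by blast
  have p0b: "\<And>i j. \<bar>phi0 i j\<bar> \<le> \<beta>" using gnorm_ge[OF phi0_per M1] phi0_bd by (meson order_trans)
  have Bpos: "B0 \<alpha> \<tau>1 > 0" unfolding B0_def using alpha tau by simp
  have part1: "\<forall>n i j. \<bar>phi n i j\<bar> \<le> \<beta>"
    if T: "\<tau>1 \<le> (4 / (11 * (\<alpha>/2) * m * (\<kappa> + 4 * \<epsilon>^2 / (L / real M)^2) * Gamma (2 - \<alpha>))) powr (1 / \<alpha>)"
  proof -
    let ?K = "(\<alpha>/2) * m * (\<kappa> + 4 * \<epsilon>^2 / h^2)"
    have K: "?K > 0" using alpha m kap0 eps h by (intro mult_pos_pos) (auto intro!: add_nonneg_pos)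
    have eq: "4 / (11 * (\<alpha>/2) * m * (\<kappa> + 4 * \<epsilon>^2 / (L / real M)^2) * Gamma (2 - \<alpha>)) = 4 / (11 * ?K * Gamma (2 - \<alpha>))"
      unfolding h_def by (simp add: mult_ac)
    have T': "\<tau>1 \<le> (4 / (11 * ?K * Gamma (2 - \<alpha>))) powr (1 / \<alpha>)" using T unfolding eq .
    have "B0 \<alpha> \<tau>1 \<ge> 11/8 * ?K" by (rule B_bound[OF alpha tau K T'])
    then have Bb: "B0 \<alpha> \<tau>1 \<ge> ?K" using K by linarith
    show ?thesis
    proof (rule allI)
      fix n show "\<forall>i j. \<bar>phi n i j\<bar> \<le> \<beta>"
      proof (induct n)
        case 0 then show ?case using p0b iter0 by simp
      next
        case (Suc n)
        show ?case
          using bound_step[OF itS[of n] _ M1 h m eps alpha kap0 Bb _ p0b g] iter_per Suc by blast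
      qed
    qed
  qed
  show ?thesis
  proof (intro conjI impI)
    assume T: "\<tau>1 \<le> (4 / (11 * (\<alpha>/2) * m * (\<kappa> + 4 * \<epsilon>^2 / (L / real M)^2) * Gamma (2 - \<alpha>))) powr (1 / \<alpha>)"
    show "\<forall>s\<ge>1. gnorm_inf M (phi s) \<le> \<beta>"
      using part1[OF T] gnorm_le[OF M1] by blast
  next
    assume T: "\<tau>1 \<le> (4 / (11 * (\<alpha>/2) * m * (\<kappa> + 4 * \<epsilon>^2 / (L / real M)^2) * Gamma (2 - \<alpha>))) powr (1 / \<alpha>)
        \<and> \<tau>1 \<le> (4 / (11 * \<kappa> * (1 - \<alpha>/2) * m * Gamma (2 - \<alpha>))) powr (1 / \<alpha>)"
    have pb: "\<And>n i j. \<bar>phi n i j\<bar> \<le> \<beta>" using part1 T by blast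
    let ?K = "\<kappa> * (1 - \<alpha>/2) * m"
    have kpos: "\<kappa> > 0"
    proof (rule ccontr)
      assume "\<not> \<kappa> > 0"
      then have "\<kappa> = 0" using kap0 by simp
      then have "\<tau>1 \<le> 0" using T by simp
      then show False using tau by simp
    qed
    have K: "?K > 0" using kpos alpha m by simp
    have "B0 \<alpha> \<tau>1 \<ge> 11/8 * ?K" using B_bound[OF alpha tau K] T by (simp add: mult_ac)
    then have Bb: "B0 \<alpha> \<tau>1 > ?K" using K by linarith
    define c where "c = B0 \<alpha> \<tau>1 + m*\<kappa>*(1-\<alpha>/2)"
    define q where "q = 2*m*\<kappa>*(1-\<alpha>/2) / c"
    have c0: "c > 0" unfolding c_def using Bpos m kap0 alpha by (simp add: add_pos_nonneg)
    have q0: "q \<ge> 0" unfolding q_def using c0 m kap0 alpha by simp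
    have q1: "q < 1" unfolding q_def using c0 Bb by (simp add: c_def algebra_simps)
    have contr: "\<bar>u i j - u' i j\<bar> \<le> q * D"
      if "first_step_iter f m \<epsilon> \<alpha> \<kappa> h \<tau>1 phi0 v u" "first_step_iter f m \<epsilon> \<alpha> \<kappa> h \<tau>1 phi0 v' u'"
         "grid_periodic M u" "grid_periodic M u'" "\<And>i j. \<bar>v i j\<bar> \<le> \<beta>" "\<And>i j. \<bar>v' i j\<bar> \<le> \<beta>"
         "\<And>i j. \<bar>v i j - v' i j\<bar> \<le> D" for u u' v v' D i j
    proof -
      have "c * \<bar>u i j - u' i j\<bar> \<le> 2*m*\<kappa>*(1-\<alpha>/2) * D"
        unfolding c_def by (rule contr_step[OF that(1,2,3,4) M1 h m alpha kap0 Bpos that(5,6) p0b lip that(7)])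
      also have "... = c * (q * D)" unfolding q_def using c0 by simp
      finally show ?thesis using c0 by simp
    qed
    have diffb0: "\<forall>i j. \<bar>phi (Suc n) i j - phi n i j\<bar> \<le> q^n * (2*\<beta>)" for n
    proof (induct n)
      case 0
      show ?case
      proof (intro allI)
        fix i j show "\<bar>phi (Suc 0) i j - phi 0 i j\<bar> \<le> q^0 * (2*\<beta>)"
          using pb[of 1 i j] pb[of 0 i j] by (simp add: abs_le_iff)
      qed
    next
      case (Suc n)
      show ?case
      proof (intro allI)
        fix i j
        have "\<bar>phi (Suc (Suc n)) i j - phi (Suc n) i j\<bar> \<le> q * (q^n * (2*\<beta>))"
          by (rule contr[OF itS[of "Suc n"] itS[of n] iter_per[rule_format] iter_per[rule_format] pb pb]) (use Suc in blast)
        then show "\<bar>phi (Suc (Suc n)) i j - phi (Suc n) i j\<bar> \<le> q^(Suc n) * (2*\<beta>)" by simp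
      qed
    qed
    have diffb: "\<bar>phi (Suc n) i j - phi n i j\<bar> \<le> q^n * (2*\<beta>)" for n i j using diffb0 by blast
    have conv: "convergent (\<lambda>n. phi n i j)" for i j
    proof -
      have "summable (\<lambda>n. q^n * (2*\<beta>))" using q0 q1 by (intro summable_mult2 summable_geometric) simp
      then have "summable (\<lambda>n. phi (Suc n) i j - phi n i j)"
        by (rule summable_comparison_test'[where N=0]) (use diffb in simp)
      then have "(\<lambda>n. \<Sum>k<n. phi (Suc k) i j - phi k i j) \<longlonglongrightarrow> (\<Sum>n. phi (Suc n) i j - phi n i j)"
        by (rule summable_LIMSEQ)
      then have "(\<lambda>n. phi 0 i j + (\<Sum>k<n. phi (Suc k) i j - phi k i j)) \<longlonglongrightarrow> phi 0 i j + (\<Sum>n. phi (Suc n) i j - phi n i j)"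
        by (intro tendsto_intros)
      moreover have "\<And>n. phi 0 i j + (\<Sum>k<n. phi (Suc k) i j - phi k i j) = phi n i j"
        using sum_lessThan_telescope[of "\<lambda>k. phi k i j"] by simp
      ultimately show ?thesis unfolding convergent_def by auto
    qed
    define phi1 where "phi1 = (\<lambda>i j. lim (\<lambda>n. phi n i j))"
    have lim1: "(\<lambda>n. phi n i j) \<longlonglongrightarrow> phi1 i j" for i j
      unfolding phi1_def using conv convergent_LIMSEQ_iff by blast
    have limS: "(\<lambda>n. phi (Suc n) i j) \<longlonglongrightarrow> phi1 i j" for i j
      using lim1 LIMSEQ_Suc by blast
    have b1: "\<bar>phi1 i j\<bar> \<le> \<beta>" for i j
      by (rule LIMSEQ_le_const2[OF tendsto_rabs[OF lim1]]) (use pb in blast)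
    have per1: "grid_periodic M phi1"
      using iter_per unfolding grid_periodic_def phi1_def by simp
    have fix1: "first_step_iter f m \<epsilon> \<alpha> \<kappa> h \<tau>1 phi0 phi1 phi1"
      unfolding first_step_iter_def
    proof (intro allI)
      fix i j
      let ?X = "\<lambda>n. B0 \<alpha> \<tau>1 * (phi (Suc n) i j - phi0 i j)"
      let ?Y = "\<lambda>n. m * (\<epsilon>^2 * lap_h h (shift_comb \<alpha> (phi (Suc n)) phi0) i j
             + f (shift_comb \<alpha> (phi n) phi0 i j)
             - \<kappa> * (shift_comb \<alpha> (phi (Suc n)) phi0 i j - shift_comb \<alpha> (phi n) phi0 i j))"
      have XY: "?X = ?Y" using itS unfolding first_step_iter_def by blast
      have X: "?X \<longlonglongrightarrow> B0 \<alpha> \<tau>1 * (phi1 i j - phi0 i j)" by (intro tendsto_intros limS)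
      have sc: "(\<lambda>n. shift_comb \<alpha> (phi n) phi0 i j) \<longlonglongrightarrow> shift_comb \<alpha> phi1 phi0 i j"
        unfolding shift_comb_def by (intro tendsto_intros lim1)
      have scS: "(\<lambda>n. shift_comb \<alpha> (phi (Suc n)) phi0 a b) \<longlonglongrightarrow> shift_comb \<alpha> phi1 phi0 a b" for a b
        unfolding shift_comb_def by (intro tendsto_intros limS)
      have Vb: "shift_comb \<alpha> phi1 phi0 i j \<in> {-\<beta>..\<beta>}"
      proof -
        have "\<bar>shift_comb \<alpha> phi1 phi0 i j\<bar> \<le> \<bar>(1-\<alpha>/2) * phi1 i j\<bar> + \<bar>\<alpha>/2 * phi0 i j\<bar>"
          unfolding shift_comb_def by (rule abs_triangle_ineq)
        also have "... = (1-\<alpha>/2) * \<bar>phi1 i j\<bar> + \<alpha>/2 * \<bar>phi0 i j\<bar>" using alpha by (simp add: abs_mult)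
        also have "... \<le> (1-\<alpha>/2) * \<beta> + \<alpha>/2 * \<beta>"
          using b1[of i j] p0b[of i j] alpha by (intro add_mono mult_left_mono) auto
        finally show ?thesis by (auto simp: algebra_simps abs_le_iff)
      qed
      have fc: "(\<lambda>n. f (shift_comb \<alpha> (phi n) phi0 i j)) \<longlonglongrightarrow> f (shift_comb \<alpha> phi1 phi0 i j)"
        by (rule isCont_tendsto_compose[OF cont[OF Vb] sc])
      have Y: "?Y \<longlonglongrightarrow> m * (\<epsilon>^2 * lap_h h (shift_comb \<alpha> phi1 phi0) i j
             + f (shift_comb \<alpha> phi1 phi0 i j)
             - \<kappa> * (shift_comb \<alpha> phi1 phi0 i j - shift_comb \<alpha> phi1 phi0 i j))"
        unfolding lap_h_def using hne by (intro tendsto_intros fc sc scS) auto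
      show "B0 \<alpha> \<tau>1 * (phi1 i j - phi0 i j) = m * (\<epsilon>^2 * lap_h h (shift_comb \<alpha> phi1 phi0) i j
             + f (shift_comb \<alpha> phi1 phi0 i j)
             - \<kappa> * (shift_comb \<alpha> phi1 phi0 i j - shift_comb \<alpha> phi1 phi0 i j))"
        using LIMSEQ_unique[OF X] Y XY by simp
    qed
    have errb0: "\<forall>i j. \<bar>phi n i j - phi1 i j\<bar> \<le> q^n * (2*\<beta>)" for n
    proof (induct n)
      case 0
      show ?case
      proof (intro allI)
        fix i j show "\<bar>phi 0 i j - phi1 i j\<bar> \<le> q^0 * (2*\<beta>)"
          using pb[of 0 i j] b1[of i j] by (simp add: abs_le_iff)
      qed
    next
      case (Suc n)
      show ?case
      proof (intro allI)
        fix i j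
        have "\<bar>phi (Suc n) i j - phi1 i j\<bar> \<le> q * (q^n * (2*\<beta>))"
          by (rule contr[OF itS[of n] fix1 iter_per[rule_format] per1 pb b1]) (use Suc in blast)
        then show "\<bar>phi (Suc n) i j - phi1 i j\<bar> \<le> q^(Suc n) * (2*\<beta>)" by simp
      qed
    qed
    have errb: "\<And>i j. \<bar>phi n i j - phi1 i j\<bar> \<le> q^n * (2*\<beta>)" for n using errb0 by blast
    show "\<exists>phi1. grid_periodic M phi1
              \<and> first_step_eq f m \<epsilon> \<alpha> (L / real M) \<tau>1 phi0 phi1
              \<and> gnorm_inf M phi1 \<le> \<beta>
              \<and> ((\<lambda>s. gnorm_inf M (\<lambda>i j. phi s i j - phi1 i j)) \<longlonglongrightarrow> 0)
              \<and> (\<forall>psi. grid_periodic M psi \<and> first_step_eq f m \<epsilon> \<alpha> (L / real M) \<tau>1 phi0 psi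
                       \<and> gnorm_inf M psi \<le> \<beta> \<longrightarrow> psi = phi1)"
      unfolding h_def[symmetric]
    proof (intro exI conjI allI impI)
      show "grid_periodic M phi1" by (rule per1)
      show "first_step_eq f m \<epsilon> \<alpha> h \<tau>1 phi0 phi1" using fix1 eq_iff_iter by metis
      show "gnorm_inf M phi1 \<le> \<beta>" using gnorm_le[OF M1] b1 by blast
      show "(\<lambda>s. gnorm_inf M (\<lambda>i j. phi s i j - phi1 i j)) \<longlonglongrightarrow> 0"
      proof (rule Lim_null_comparison)
        show "\<forall>\<^sub>F s in sequentially. norm (gnorm_inf M (\<lambda>i j. phi s i j - phi1 i j)) \<le> q^s * (2*\<beta>)"
          using gnorm_le[OF M1] errb gnorm_nonneg[OF M1] by (intro always_eventually allI) (simp add: abs_of_nonneg)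
        have "(\<lambda>s. q^s * (2*\<beta>)) \<longlonglongrightarrow> 0 * (2*\<beta>)" using q0 q1 by (intro tendsto_intros) simp
        then show "(\<lambda>s. q^s * (2*\<beta>)) \<longlonglongrightarrow> 0" by simp
      qed
      fix psi assume ps: "grid_periodic M psi \<and> first_step_eq f m \<epsilon> \<alpha> h \<tau>1 phi0 psi \<and> gnorm_inf M psi \<le> \<beta>"
      have psb: "\<And>i j. \<bar>psi i j\<bar> \<le> \<beta>" using gnorm_ge[of M psi] ps M1 by (meson order_trans)
      have psfix: "first_step_iter f m \<epsilon> \<alpha> \<kappa> h \<tau>1 phi0 psi psi" using ps eq_iff_iter by metis
      define D where "D = gnorm_inf M (\<lambda>i j. psi i j - phi1 i j)"
      have perd: "grid_periodic M (\<lambda>i j. psi i j - phi1 i j)" using ps per1 unfolding grid_periodic_def by simp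
      have Dp: "\<And>i j. \<bar>psi i j - phi1 i j\<bar> \<le> D" unfolding D_def using gnorm_ge[OF perd M1] by simp
      have "\<And>i j. \<bar>psi i j - phi1 i j\<bar> \<le> q * D"
        by (rule contr[OF psfix fix1 _ per1 psb b1 Dp]) (use ps in blast)
      then have "D \<le> q * D" unfolding D_def using gnorm_le[OF M1] D_def by simp
      moreover have "D \<ge> 0" unfolding D_def by (rule gnorm_nonneg[OF M1])
      ultimately have "D \<le> 0" using q1 by (metis mult_le_cancel_right1 not_le order_le_less_trans)
      then have "\<And>i j. psi i j = phi1 i j" using Dp by (metis abs_le_zero_iff eq_iff_diff_eq_0 order_trans)
      then show "psi = phi1" by blast
    qed
  qed
qed

end
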